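(* Let $\mathcal F'=(\mathcal A',U,\varphi)$ be a weakening of a sequential formalism $\mathcal F=(\mathcal A,U,\varphi)$ and let $\mathcal S$ be a subset of $\mathcal A$. If $\mathcal S$ is algebraically tractable for $\mathcal F'$, then $\mathcal S$ is algebraically tractable for $\mathcal F$.
   Context: A finite non-associative algebra is a tuple $(\mathcal A,\cup,\neg,\emptyset,\mathcal B,\diamond,\overline{\cdot},e)$ where $(\mathcal A,\cup,\neg,\emptyset,\mathcal B)$ is a finite Boolean algebra and for all $x,y,z$: $\overline{\overline x}=x$, $\overline{x\cup y}=\overline x\cup\overline y$, $\overline{x\diamond y}=\overline y\diamond\overline x$, $e\diamond x=x\diamond e=x$, $x\diamond(y\cup z)=(x\diamond y)\cup(x\diamond z)$, $(x\diamond y)\cap\overline z=\emptyset\iff(y\diamond z)\cap\overline x=\emptyset$. $r\subseteq r'$ means $r\cup r'=r'$; atoms are basic relations. A projection operator from $\mathcal A$ to $\mathcal A'$ is a map $\Rsh$ with $\Rsh(r\cup r')=\Rsh r\cup\Rsh r'$ and $\Rsh\overline r=\overline{\Rsh r}$. A finite multi-algebra is a product $\mathcal A_1\times\cdots\times\mathcal A_m$ of finite non-associative algebras with projection operators $\Rsh_i^j:\mathcal A_i\to\mathcal A_j$ for distinct $i,j$. Relations $R=(R_1,\dots,R_m)$; basic if all $R_i$ are atoms; universal $\mathcal B=(\mathcal B_1,\dots,\mathcal B_m)$; operations and $\subseteq$ componentwise; $B\in R$ means $B$ basic, $B\subseteq R$. The projection closure $\Rsh R$ is obtained by repeatedly replacing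 $R_j$ by $R_j\cap\Rsh_i^jR_i$ until a fixed point. A sequential formalism is $(\mathcal A,U,\varphi)$ with $\mathcal A$ a finite multi-algebra, $U\ne\emptyset$, $\varphi:\mathcal A\to 2^{U\times U}$ satisfying $\varphi(\Rsh R)=\varphi(R)$, $\varphi(\overline R)=\varphi(R)^{-1}$, $\varphi((\emptyset,\dots,\emptyset))=\emptyset$, $\varphi(R\diamond R')\supseteq(\varphi(R)\circ\varphi(R'))\cap\varphi(\mathcal B)$, $\varphi(R\cap R')=\varphi(R)\cap\varphi(R')$, $\varphi(R)=\bigcup_{B\in R}\varphi(B)$. A multi-algebra $\mathcal A'$ is a weakening of $\mathcal A$ if it has the same Cartesian product (same algebras and operations) and its projections satisfy $\Rsh_i^jb\subseteq\Rsh_i'^jb$ for all distinct $i,j$ and all atoms $b$ of $\mathcal A_i$ (with $\Rsh$ those of $\mathcal A$, $\Rsh'$ those of $\mathcal A'$); then $(\mathcal A',U,\varphi)$ is called a weakening of $(\mathcal A,U,\varphi)$. A network over $\mathcal S$ is a finite set $E$ of variables with $N^{xy}\in\mathcal S$ for distinct $x,y$, $N^{yx}=\overline{N^{xy}}$; it is satisfiable if there is $(u_x)_{x\in E}\subseteq U$ with $(u_x,u_y)\in\varphi(N^{xy})$ for all distinct $x,y$; trivially inconsistent if some component of some $N^{xy}$ is $\emptyset$. The algebraic closure of $N$ for a formalism is obtained by repeatedly applying $N^{xz}\leftarrow\Rsh N^{xz}$ (projection closure of that formalism's multi-algebra) and $N^{xz}\leftarrow N^{xz}\cap(N^{xy}\diamond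 N^{yz})$ until a fixed point. $\mathcal S$ is algebraically tractable for a formalism if every network over $\mathcal S$ is satisfiable iff its algebraic closure for that formalism is not trivially inconsistent. *)

theory Defs
  imports Main
begin

text \<open>Finite Boolean algebras are represented concretely as powerset algebras
  of their (finite) set of atoms: an element of the i-th algebra is a subset of
  atoms i, union is set union, negation is complement within atoms i, the
  bottom is the empty set and the top is atoms i.\<close>

record 'b multi_alg =
  dim   :: nat
  atoms :: "nat \<Rightarrow> 'b set"
  comp  :: "nat \<Rightarrow> 'b set \<Rightarrow> 'b set \<Rightarrow> 'b set"
  cnv   :: "nat \<Rightarrow> 'b set \<Rightarrow> 'b set"
  ident :: "nat \<Rightarrow> 'b set"
  proj  :: "nat \<Rightarrow> nat \<Rightarrow> 'b set \<Rightarrow> 'b set"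

definition non_assoc_alg ::
  "'b set \<Rightarrow> ('b set \<Rightarrow> 'b set \<Rightarrow> 'b set) \<Rightarrow> ('b set \<Rightarrow> 'b set) \<Rightarrow> 'b set \<Rightarrow> bool" where
  "non_assoc_alg A c v e \<longleftrightarrow>
     finite A \<and> e \<subseteq> A \<and>
     (\<forall>x y. x \<subseteq> A \<longrightarrow> y \<subseteq> A \<longrightarrow> c x y \<subseteq> A) \<and>
     (\<forall>x. x \<subseteq> A \<longrightarrow> v x \<subseteq> A) \<and>
     (\<forall>x. x \<subseteq> A \<longrightarrow> v (v x) = x) \<and>
     (\<forall>x y. x \<subseteq> A \<longrightarrow> y \<subseteq> A \<longrightarrow> v (x \<union> y) = v x \<union> v y) \<and>
     (\<forall>x y. x \<subseteq> A \<longrightarrow> y \<subseteq> A \<longrightarrow> v (c x y) = c (v y) (v x)) \<and>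
     (\<forall>x. x \<subseteq> A \<longrightarrow> c e x = x \<and> c x e = x) \<and>
     (\<forall>x y z. x \<subseteq> A \<longrightarrow> y \<subseteq> A \<longrightarrow> z \<subseteq> A \<longrightarrow> c x (y \<union> z) = c x y \<union> c x z) \<and>
     (\<forall>x y z. x \<subseteq> A \<longrightarrow> y \<subseteq> A \<longrightarrow> z \<subseteq> A \<longrightarrow>
        (c x y \<inter> v z = {} \<longleftrightarrow> c y z \<inter> v x = {}))"

definition projection_op ::
  "'b set \<Rightarrow> ('b set \<Rightarrow> 'b set) \<Rightarrow> 'b set \<Rightarrow> ('b set \<Rightarrow> 'b set) \<Rightarrow> ('b set \<Rightarrow> 'b set) \<Rightarrow> bool" where
  "projection_op A v A' v' P \<longleftrightarrow>
     (\<forall>r. r \<subseteq> A \<longrightarrow> P r \<subseteq> A') \<and>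
     (\<forall>r r'. r \<subseteq> A \<longrightarrow> r' \<subseteq> A \<longrightarrow> P (r \<union> r') = P r \<union> P r') \<and>
     (\<forall>r. r \<subseteq> A \<longrightarrow> P (v r) = v' (P r))"

definition multi_algebra :: "'b multi_alg \<Rightarrow> bool" where
  "multi_algebra M \<longleftrightarrow> 1 \<le> dim M \<and>
     (\<forall>i < dim M. non_assoc_alg (atoms M i) (comp M i) (cnv M i) (ident M i)) \<and>
     (\<forall>i < dim M. \<forall>j < dim M. i \<noteq> j \<longrightarrow>
        projection_op (atoms M i) (cnv M i) (atoms M j) (cnv M j) (proj M i j))"

type_synonym 'b rel = "nat \<Rightarrow> 'b set"

definition rels :: "'b multi_alg \<Rightarrow> 'b rel set" where
  "rels M = {R. (\<forall>i < dim M. R i \<subseteq> atoms M i) \<and> (\<forall>i. dim M \<le> i \<longrightarrow> R i = {})}"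

definition mcomp :: "'b multi_alg \<Rightarrow> 'b rel \<Rightarrow> 'b rel \<Rightarrow> 'b rel" where
  "mcomp M R R' = (\<lambda>i. if i < dim M then comp M i (R i) (R' i) else {})"

definition mconv :: "'b multi_alg \<Rightarrow> 'b rel \<Rightarrow> 'b rel" where
  "mconv M R = (\<lambda>i. if i < dim M then cnv M i (R i) else {})"

definition minter :: "'b rel \<Rightarrow> 'b rel \<Rightarrow> 'b rel" where
  "minter R R' = (\<lambda>i. R i \<inter> R' i)"

definition msub :: "'b rel \<Rightarrow> 'b rel \<Rightarrow> bool" where
  "msub R R' \<longleftrightarrow> (\<forall>i. R i \<subseteq> R' i)"

definition muniv :: "'b multi_alg \<Rightarrow> 'b rel" where
  "muniv M = (\<lambda>i. if i < dim M then atoms M i else {})"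

definition mempty :: "'b rel" where
  "mempty = (\<lambda>i. {})"

definition basic :: "'b multi_alg \<Rightarrow> 'b rel \<Rightarrow> bool" where
  "basic M B \<longleftrightarrow> B \<in> rels M \<and> (\<forall>i < dim M. \<exists>a \<in> atoms M i. B i = {a})"

definition fixpoint_closure :: "('a \<Rightarrow> 'a \<Rightarrow> bool) \<Rightarrow> 'a \<Rightarrow> 'a" where
  "fixpoint_closure step x = (THE y. step\<^sup>*\<^sup>* x y \<and> (\<forall>z. step y z \<longrightarrow> z = y))"

definition proj_step :: "'b multi_alg \<Rightarrow> 'b rel \<Rightarrow> 'b rel \<Rightarrow> bool" where
  "proj_step M R R' \<longleftrightarrow> (\<exists>i < dim M. \<exists>j < dim M. i \<noteq> j \<and>
      R' = R(j := R j \<inter> proj M i j (R i)))"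

definition proj_closure :: "'b multi_alg \<Rightarrow> 'b rel \<Rightarrow> 'b rel" where
  "proj_closure M R = fixpoint_closure (proj_step M) R"

definition seq_formalism :: "'b multi_alg \<Rightarrow> 'u set \<Rightarrow> ('b rel \<Rightarrow> ('u \<times> 'u) set) \<Rightarrow> bool" where
  "seq_formalism M U \<phi> \<longleftrightarrow> multi_algebra M \<and> U \<noteq> {} \<and>
     (\<forall>R \<in> rels M. \<phi> R \<subseteq> U \<times> U) \<and>
     (\<forall>R \<in> rels M. \<phi> (proj_closure M R) = \<phi> R) \<and>
     (\<forall>R \<in> rels M. \<phi> (mconv M R) = (\<phi> R)\<inverse>) \<and>
     \<phi> mempty = {} \<and>
     (\<forall>R \<in> rels M. \<forall>R' \<in> rels M. \<phi> (mcomp M R R') \<supseteq> (\<phi> R O \<phi> R') \<inter> \<phi> (muniv M)) \<and>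
     (\<forall>R \<in> rels M. \<forall>R' \<in> rels M. \<phi> (minter R R') = \<phi> R \<inter> \<phi> R') \<and>
     (\<forall>R \<in> rels M. \<phi> R = (\<Union>B \<in> {B. basic M B \<and> msub B R}. \<phi> B))"

definition weakening :: "'b multi_alg \<Rightarrow> 'b multi_alg \<Rightarrow> bool" where
  "weakening M' M \<longleftrightarrow> multi_algebra M \<and> multi_algebra M' \<and>
     dim M' = dim M \<and> atoms M' = atoms M \<and> comp M' = comp M \<and>
     cnv M' = cnv M \<and> ident M' = ident M \<and>
     (\<forall>i < dim M. \<forall>j < dim M. i \<noteq> j \<longrightarrow>
        (\<forall>a \<in> atoms M i. proj M i j {a} \<subseteq> proj M' i j {a}))"

definition network_over :: "'b multi_alg \<Rightarrow> 'b rel set \<Rightarrow> nat set \<Rightarrow> (nat \<Rightarrow> nat \<Rightarrow> 'b rel) \<Rightarrow> bool" where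
  "network_over M S E N \<longleftrightarrow> finite E \<and>
     (\<forall>x \<in> E. \<forall>y \<in> E. x \<noteq> y \<longrightarrow> N x y \<in> S \<and> N y x = mconv M (N x y))"

definition satisfiable :: "'u set \<Rightarrow> ('b rel \<Rightarrow> ('u \<times> 'u) set) \<Rightarrow> nat set \<Rightarrow> (nat \<Rightarrow> nat \<Rightarrow> 'b rel) \<Rightarrow> bool" where
  "satisfiable U \<phi> E N \<longleftrightarrow> (\<exists>u. (\<forall>x \<in> E. u x \<in> U) \<and>
     (\<forall>x \<in> E. \<forall>y \<in> E. x \<noteq> y \<longrightarrow> (u x, u y) \<in> \<phi> (N x y)))"

definition trivially_inconsistent :: "'b multi_alg \<Rightarrow> nat set \<Rightarrow> (nat \<Rightarrow> nat \<Rightarrow> 'b rel) \<Rightarrow> bool" where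
  "trivially_inconsistent M E N \<longleftrightarrow>
     (\<exists>x \<in> E. \<exists>y \<in> E. x \<noteq> y \<and> (\<exists>i < dim M. N x y i = {}))"

text \<open>One refinement step of algebraic closure; the pair (x,z) and its converse (z,x)
  are updated together so that the result is again a network.\<close>
definition upd_pair :: "'b multi_alg \<Rightarrow> (nat \<Rightarrow> nat \<Rightarrow> 'b rel) \<Rightarrow> nat \<Rightarrow> nat \<Rightarrow> 'b rel \<Rightarrow> (nat \<Rightarrow> nat \<Rightarrow> 'b rel)" where
  "upd_pair M N x z R = (\<lambda>a b. if a = x \<and> b = z then R
                               else if a = z \<and> b = x then mconv M R else N a b)"

definition ac_step :: "'b multi_alg \<Rightarrow> nat set \<Rightarrow> (nat \<Rightarrow> nat \<Rightarrow> 'b rel) \<Rightarrow> (nat \<Rightarrow> nat \<Rightarrow> 'b rel) \<Rightarrow> bool" where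
  "ac_step M E N N' \<longleftrightarrow> (\<exists>x \<in> E. \<exists>z \<in> E. x \<noteq> z \<and>
     (N' = upd_pair M N x z (proj_closure M (N x z)) \<or>
      (\<exists>y \<in> E. y \<noteq> x \<and> y \<noteq> z \<and>
         N' = upd_pair M N x z (minter (N x z) (mcomp M (N x y) (N y z))))))"

definition alg_closure :: "'b multi_alg \<Rightarrow> nat set \<Rightarrow> (nat \<Rightarrow> nat \<Rightarrow> 'b rel) \<Rightarrow> (nat \<Rightarrow> nat \<Rightarrow> 'b rel)" where
  "alg_closure M E N = fixpoint_closure (ac_step M E) N"

definition alg_tractable :: "'b multi_alg \<Rightarrow> 'u set \<Rightarrow> ('b rel \<Rightarrow> ('u \<times> 'u) set) \<Rightarrow> 'b rel set \<Rightarrow> bool" where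
  "alg_tractable M U \<phi> S \<longleftrightarrow> (\<forall>E N. network_over M S E N \<longrightarrow>
     (satisfiable U \<phi> E N \<longleftrightarrow> \<not> trivially_inconsistent M E (alg_closure M E N)))"

end

theory Submission
  imports Defs
begin

lemma fc_lemma:
  fixes step :: "'a::order \<Rightarrow> 'a \<Rightarrow> bool" and \<mu> :: "'a \<Rightarrow> nat"
  assumes Dx: "D x"
  and pres: "\<And>a b. D a \<Longrightarrow> step a b \<Longrightarrow> D b"
  and dec: "\<And>a b. D a \<Longrightarrow> step a b \<Longrightarrow> b \<le> a"
  and meas: "\<And>a b. D a \<Longrightarrow> step a b \<Longrightarrow> b \<noteq> a \<Longrightarrow> \<mu> b < \<mu> a"
  and mono: "\<And>a t b. D a \<Longrightarrow> (\<forall>z. step t z \<longrightarrow> z = t) \<Longrightarrow> t \<le> a \<Longrightarrow> step a b \<Longrightarrow> t \<le> b"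
  shows "step\<^sup>*\<^sup>* x (fixpoint_closure step x) \<and>
         (\<forall>z. step (fixpoint_closure step x) z \<longrightarrow> z = fixpoint_closure step x) \<and>
         D (fixpoint_closure step x) \<and> fixpoint_closure step x \<le> x \<and>
         (\<forall>t. (\<forall>z. step t z \<longrightarrow> z = t) \<longrightarrow> t \<le> x \<longrightarrow> t \<le> fixpoint_closure step x)"
proof -
  have reach: "D z \<and> z \<le> x \<and> (\<forall>t. (\<forall>z. step t z \<longrightarrow> z = t) \<longrightarrow> t \<le> x \<longrightarrow> t \<le> z)"
    if "step\<^sup>*\<^sup>* x z" for z
    using that
  proof (induction rule: rtranclp_induct)
    case base thus ?case using Dx by simp
  next
    case (step y z)
    then show ?case using pres dec mono order_trans by metis
  qed
  have ex: "\<forall>a. \<mu> a = n \<longrightarrow> D a \<longrightarrow> (\<exists>y. step\<^sup>*\<^sup>* a y \<and> (\<forall>z. step y z \<longrightarrow> z = y))" for n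
  proof (induction n rule: less_induct)
    case (less n)
    show ?case
    proof (intro allI impI)
      fix a assume a: "\<mu> a = n" "D a"
      show "\<exists>y. step\<^sup>*\<^sup>* a y \<and> (\<forall>z. step y z \<longrightarrow> z = y)"
      proof (cases "\<forall>z. step a z \<longrightarrow> z = a")
        case True thus ?thesis by blast
      next
        case False
        then obtain b where b: "step a b" "b \<noteq> a" by blast
        have "\<mu> b < n" using meas[OF a(2) b] a(1) by simp
        moreover have "D b" using pres a(2) b(1) by blast
        ultimately obtain y where "step\<^sup>*\<^sup>* b y" "\<forall>z. step y z \<longrightarrow> z = y" using less by blast
        thus ?thesis using b(1) by (meson converse_rtranclp_into_rtranclp)
      qed
    qed
  qed
  obtain y where y: "step\<^sup>*\<^sup>* x y" "\<forall>z. step y z \<longrightarrow> z = y" using ex Dx by blast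
  have uniq: "y' = y" if "step\<^sup>*\<^sup>* x y' \<and> (\<forall>z. step y' z \<longrightarrow> z = y')" for y'
  proof -
    have "y \<le> y'" using reach[OF y(1)] reach that y(2) by blast
    moreover have "y' \<le> y" using reach[OF y(1)] reach that y(2) by blast
    ultimately show ?thesis by simp
  qed
  have "fixpoint_closure step x = y" unfolding fixpoint_closure_def
  proof (rule the_equality)
    show "step\<^sup>*\<^sup>* x y \<and> (\<forall>z. step y z \<longrightarrow> z = y)" using y by blast
  next
    fix y' assume "step\<^sup>*\<^sup>* x y' \<and> (\<forall>z. step y' z \<longrightarrow> z = y')"
    thus "y' = y" by (rule uniq)
  qed
  thus ?thesis using y reach[OF y(1)] by blast
qed

lemma ma_na: "multi_algebra M \<Longrightarrow> i < dim M \<Longrightarrow> non_assoc_alg (atoms M i) (comp M i) (cnv M i) (ident M i)"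
  unfolding multi_algebra_def by blast

lemma ma_proj: "multi_algebra M \<Longrightarrow> i < dim M \<Longrightarrow> j < dim M \<Longrightarrow> i \<noteq> j \<Longrightarrow>
   projection_op (atoms M i) (cnv M i) (atoms M j) (cnv M j) (proj M i j)"
  unfolding multi_algebra_def by blast

lemma na_cnv_mono: "non_assoc_alg A c v e \<Longrightarrow> x \<subseteq> y \<Longrightarrow> y \<subseteq> A \<Longrightarrow> v x \<subseteq> v y"
proof -
  assume a: "non_assoc_alg A c v e" "x \<subseteq> y" "y \<subseteq> A"
  have h: "\<forall>x y. x \<subseteq> A \<longrightarrow> y \<subseteq> A \<longrightarrow> v (x \<union> y) = v x \<union> v y"
    using a(1) unfolding non_assoc_alg_def by (elim conjE) assumption
  have xA: "x \<subseteq> A" using a by blast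
  have e: "x \<union> y = y" using a by blast
  have "v y = v (x \<union> y)" by (simp only: e)
  also have "\<dots> = v x \<union> v y" using h[rule_format, OF xA a(3)] .
  finally show ?thesis by blast
qed

lemma na_cnv_in: "non_assoc_alg A c v e \<Longrightarrow> x \<subseteq> A \<Longrightarrow> v x \<subseteq> A"
proof -
  assume a: "non_assoc_alg A c v e" "x \<subseteq> A"
  have h: "\<forall>x. x \<subseteq> A \<longrightarrow> v x \<subseteq> A"
    using a(1) unfolding non_assoc_alg_def by (elim conjE) assumption
  show ?thesis using h a(2) by blast
qed

lemma na_cnv_inv: "non_assoc_alg A c v e \<Longrightarrow> x \<subseteq> A \<Longrightarrow> v (v x) = x"
proof -
  assume a: "non_assoc_alg A c v e" "x \<subseteq> A"
  have h: "\<forall>x. x \<subseteq> A \<longrightarrow> v (v x) = x"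
    using a(1) unfolding non_assoc_alg_def by (elim conjE) assumption
  show ?thesis using h a(2) by blast
qed

lemma na_comp_in: "non_assoc_alg A c v e \<Longrightarrow> x \<subseteq> A \<Longrightarrow> y \<subseteq> A \<Longrightarrow> c x y \<subseteq> A"
proof -
  assume a: "non_assoc_alg A c v e" "x \<subseteq> A" "y \<subseteq> A"
  have h: "\<forall>x y. x \<subseteq> A \<longrightarrow> y \<subseteq> A \<longrightarrow> c x y \<subseteq> A"
    using a(1) unfolding non_assoc_alg_def by (elim conjE) assumption
  show ?thesis using h a(2,3) by blast
qed

lemma na_finite: "non_assoc_alg A c v e \<Longrightarrow> finite A"
  unfolding non_assoc_alg_def by (elim conjE) assumption

lemma na_comp_mono_r: "non_assoc_alg A c v e \<Longrightarrow> x \<subseteq> A \<Longrightarrow> y \<subseteq> y' \<Longrightarrow> y' \<subseteq> A \<Longrightarrow> c x y \<subseteq> c x y'"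
proof -
  assume a: "non_assoc_alg A c v e" "x \<subseteq> A" "y \<subseteq> y'" "y' \<subseteq> A"
  have h: "\<forall>x y z. x \<subseteq> A \<longrightarrow> y \<subseteq> A \<longrightarrow> z \<subseteq> A \<longrightarrow> c x (y \<union> z) = c x y \<union> c x z"
    using a(1) unfolding non_assoc_alg_def by (elim conjE) assumption
  have yA: "y \<subseteq> A" using a by blast
  have e: "y \<union> y' = y'" using a by blast
  have "c x y' = c x (y \<union> y')" by (simp only: e)
  also have "\<dots> = c x y \<union> c x y'" using h[rule_format, OF a(2) yA a(4)] .
  finally show ?thesis by blast
qed

lemma na_comp_mono: "non_assoc_alg A c v e \<Longrightarrow> x \<subseteq> x' \<Longrightarrow> x' \<subseteq> A \<Longrightarrow> y \<subseteq> y' \<Longrightarrow> y' \<subseteq> A \<Longrightarrow> c x y \<subseteq> c x' y'"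
proof -
  assume a: "non_assoc_alg A c v e" "x \<subseteq> x'" "x' \<subseteq> A" "y \<subseteq> y'" "y' \<subseteq> A"
  have xA: "x \<subseteq> A" "y \<subseteq> A" using a by auto
  have 1: "c x y \<subseteq> c x y'" using na_comp_mono_r[OF a(1) xA(1) a(4) a(5)] .
  have cv0: "\<forall>x y. x \<subseteq> A \<longrightarrow> y \<subseteq> A \<longrightarrow> v (c x y) = c (v y) (v x)"
    using a(1) unfolding non_assoc_alg_def by (elim conjE) assumption
  have cv: "v (c p q) = c (v q) (v p)" if "p \<subseteq> A" "q \<subseteq> A" for p q
    using cv0 that by blast
  have "c (v y') (v x) \<subseteq> c (v y') (v x')"
    by (rule na_comp_mono_r[OF a(1) na_cnv_in[OF a(1) a(5)] na_cnv_mono[OF a(1) a(2) a(3)] na_cnv_in[OF a(1) a(3)]])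
  hence "v (c (v y') (v x)) \<subseteq> v (c (v y') (v x'))"
    by (rule na_cnv_mono[OF a(1) _ na_comp_in[OF a(1) na_cnv_in[OF a(1) a(5)] na_cnv_in[OF a(1) a(3)]]])
  moreover have "v (c x y') = c (v y') (v x)" by (rule cv[OF xA(1) a(5)])
  moreover have "v (c x' y') = c (v y') (v x')" by (rule cv[OF a(3) a(5)])
  ultimately have "v (v (c x y')) \<subseteq> v (v (c x' y'))" by simp
  moreover have "v (v (c x y')) = c x y'" by (rule na_cnv_inv[OF a(1) na_comp_in[OF a(1) xA(1) a(5)]])
  moreover have "v (v (c x' y')) = c x' y'" by (rule na_cnv_inv[OF a(1) na_comp_in[OF a(1) a(3) a(5)]])
  ultimately have "c x y' \<subseteq> c x' y'" by simp
  thus ?thesis using 1 by (meson order_trans)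
qed

lemma proj_mono: "projection_op A v A' v' P \<Longrightarrow> r \<subseteq> r' \<Longrightarrow> r' \<subseteq> A \<Longrightarrow> P r \<subseteq> P r'"
proof -
  assume a: "projection_op A v A' v' P" "r \<subseteq> r'" "r' \<subseteq> A"
  have h: "\<forall>r r'. r \<subseteq> A \<longrightarrow> r' \<subseteq> A \<longrightarrow> P (r \<union> r') = P r \<union> P r'"
    using a(1) unfolding projection_op_def by (elim conjE) assumption
  have rA: "r \<subseteq> A" using a by blast
  have e: "r \<union> r' = r'" using a by blast
  have "P r' = P (r \<union> r')" by (simp only: e)
  also have "\<dots> = P r \<union> P r'" using h[rule_format, OF rA a(3)] .
  finally show ?thesis by blast
qed

lemma proj_singletons: assumes "projection_op A v A' v' P" "finite r" "r \<noteq> {}" "r \<subseteq> A"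
  shows "P r = (\<Union>a\<in>r. P {a})"
proof -
  have h: "\<forall>r r'. r \<subseteq> A \<longrightarrow> r' \<subseteq> A \<longrightarrow> P (r \<union> r') = P r \<union> P r'"
    using assms(1) unfolding projection_op_def by (elim conjE) assumption
  show ?thesis
  using assms(2,3,4) proof (induction r rule: finite_ne_induct)
    case (singleton x) thus ?case by simp
  next
    case (insert x F)
    have FA: "F \<subseteq> A" and xA: "{x} \<subseteq> A" using insert.prems by auto
    have IH: "P F = (\<Union>a\<in>F. P {a})" using insert.IH FA by blast
    have "P (insert x F) = P ({x} \<union> F)" by simp
    also have "\<dots> = P {x} \<union> P F" using h[rule_format, OF xA FA] .
    also have "\<dots> = (\<Union>a\<in>insert x F. P {a})" using IH by simp
    finally show ?case .
  qed
qed

lemma rels_sub: "R \<in> rels M \<Longrightarrow> i < dim M \<Longrightarrow> R i \<subseteq> atoms M i"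
  unfolding rels_def by blast

lemma rels_out: "R \<in> rels M \<Longrightarrow> \<not> i < dim M \<Longrightarrow> R i = {}"
  unfolding rels_def by simp

lemma relsI: "(\<And>i. i < dim M \<Longrightarrow> R i \<subseteq> atoms M i) \<Longrightarrow> (\<And>i. \<not> i < dim M \<Longrightarrow> R i = {}) \<Longrightarrow> R \<in> rels M"
  unfolding rels_def by auto

lemma rels_down: assumes R': "R' \<in> rels M" and le: "R \<le> R'" shows "R \<in> rels M"
proof (rule relsI)
  fix i assume i: "i < dim M"
  show "R i \<subseteq> atoms M i" using rels_sub[OF R' i] le unfolding le_fun_def by blast
next
  fix i assume i: "\<not> i < dim M"
  show "R i = {}" using rels_out[OF R' i] le unfolding le_fun_def by blast
qed

lemma mconv_rels: assumes ma: "multi_algebra M" and R: "R \<in> rels M" shows "mconv M R \<in> rels M"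
proof (rule relsI)
  fix i assume i: "i < dim M"
  show "mconv M R i \<subseteq> atoms M i" using na_cnv_in[OF ma_na[OF ma i] rels_sub[OF R i]] i by (simp add: mconv_def)
next
  fix i assume "\<not> i < dim M" thus "mconv M R i = {}" by (simp add: mconv_def)
qed

lemma mcomp_rels: assumes ma: "multi_algebra M" and R: "R \<in> rels M" and R': "R' \<in> rels M"
  shows "mcomp M R R' \<in> rels M"
proof (rule relsI)
  fix i assume i: "i < dim M"
  show "mcomp M R R' i \<subseteq> atoms M i"
    using na_comp_in[OF ma_na[OF ma i] rels_sub[OF R i] rels_sub[OF R' i]] i by (simp add: mcomp_def)
next
  fix i assume "\<not> i < dim M" thus "mcomp M R R' i = {}" by (simp add: mcomp_def)
qed

lemma muniv_rels: "muniv M \<in> rels M"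
  by (rule relsI) (auto simp: muniv_def)

lemma minter_le1: "minter R R' \<le> R"
  unfolding minter_def le_fun_def by blast

lemma minter_le2: "minter R R' \<le> R'"
  unfolding minter_def le_fun_def by blast

lemma minter_rels: "R \<in> rels M \<Longrightarrow> minter R R' \<in> rels M"
  using rels_down minter_le1 by blast

lemma mconv_mono: assumes ma: "multi_algebra M" and R': "R' \<in> rels M" and le: "R \<le> R'"
  shows "mconv M R \<le> mconv M R'"
  unfolding le_fun_def
proof
  fix i show "mconv M R i \<le> mconv M R' i"
  proof (cases "i < dim M")
    case True
    have l: "R i \<subseteq> R' i" using le unfolding le_fun_def by blast
    have "cnv M i (R i) \<subseteq> cnv M i (R' i)"
      by (rule na_cnv_mono[OF ma_na[OF ma True] l rels_sub[OF R' True]])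
    thus ?thesis using True by (simp add: mconv_def)
  next
    case False thus ?thesis by (simp add: mconv_def)
  qed
qed

lemma mconv_mconv: "multi_algebra M \<Longrightarrow> R \<in> rels M \<Longrightarrow> mconv M (mconv M R) = R"
  unfolding mconv_def fun_eq_iff
  by (auto simp: na_cnv_inv[OF ma_na] rels_sub rels_out)

lemma mcomp_mono: assumes ma: "multi_algebra M" and R1': "R1' \<in> rels M" and R2': "R2' \<in> rels M"
  and le1: "R1 \<le> R1'" and le2: "R2 \<le> R2'"
  shows "mcomp M R1 R2 \<le> mcomp M R1' R2'"
  unfolding le_fun_def
proof
  fix i show "mcomp M R1 R2 i \<le> mcomp M R1' R2' i"
  proof (cases "i < dim M")
    case True
    have l1: "R1 i \<subseteq> R1' i" using le1 unfolding le_fun_def by blast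
    have l2: "R2 i \<subseteq> R2' i" using le2 unfolding le_fun_def by blast
    have "comp M i (R1 i) (R2 i) \<subseteq> comp M i (R1' i) (R2' i)"
      by (rule na_comp_mono[OF ma_na[OF ma True] l1 rels_sub[OF R1' True] l2 rels_sub[OF R2' True]])
    thus ?thesis using True by (simp add: mcomp_def)
  next
    case False thus ?thesis by (simp add: mcomp_def)
  qed
qed

definition pterm :: "'b multi_alg \<Rightarrow> 'b rel \<Rightarrow> bool" where
  "pterm M R \<longleftrightarrow> (\<forall>i<dim M. \<forall>j<dim M. i \<noteq> j \<longrightarrow> R j \<subseteq> proj M i j (R i))"

lemma pterm_iff: "(\<forall>z. proj_step M R z \<longrightarrow> z = R) \<longleftrightarrow> pterm M R"
proof
  assume h: "\<forall>z. proj_step M R z \<longrightarrow> z = R"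
  show "pterm M R" unfolding pterm_def
  proof (intro allI impI)
    fix i j assume ij: "i < dim M" "j < dim M" "i \<noteq> j"
    have "proj_step M R (R(j := R j \<inter> proj M i j (R i)))" unfolding proj_step_def using ij by blast
    hence "R(j := R j \<inter> proj M i j (R i)) = R" using h by blast
    hence "(R(j := R j \<inter> proj M i j (R i))) j = R j" by simp
    thus "R j \<subseteq> proj M i j (R i)" by auto
  qed
next
  assume p: "pterm M R"
  show "\<forall>z. proj_step M R z \<longrightarrow> z = R"
  proof (intro allI impI)
    fix z assume "proj_step M R z"
    then obtain i j where ij: "i < dim M" "j < dim M" "i \<noteq> j" and z: "z = R(j := R j \<inter> proj M i j (R i))"
      unfolding proj_step_def by blast
    have "R j \<inter> proj M i j (R i) = R j" using p ij unfolding pterm_def by blast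
    thus "z = R" using z by simp
  qed
qed

lemma pc_props:
  assumes ma: "multi_algebra M" and R: "R \<in> rels M"
  shows "proj_closure M R \<in> rels M \<and> proj_closure M R \<le> R \<and> pterm M (proj_closure M R) \<and>
         (\<forall>T. pterm M T \<longrightarrow> T \<le> R \<longrightarrow> T \<le> proj_closure M R)"
proof -
  have step_form: "\<exists>i j. i < dim M \<and> j < dim M \<and> i \<noteq> j \<and> b = a(j := a j \<inter> proj M i j (a i))"
    if "proj_step M a b" for a b
    using that unfolding proj_step_def by blast
  have dec: "b \<le> a" if "a \<in> rels M" "proj_step M a b" for a b
    using step_form[OF that(2)] unfolding le_fun_def by (auto split: if_splits)
  have pres: "b \<in> rels M" if "a \<in> rels M" "proj_step M a b" for a b
    using rels_down[OF that(1) dec[OF that]] .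
  have meas: "(\<Sum>i<dim M. card (b i)) < (\<Sum>i<dim M. card (a i))"
    if ab: "a \<in> rels M" "proj_step M a b" "b \<noteq> a" for a b
  proof -
    obtain i j where ij: "i < dim M" "j < dim M" "i \<noteq> j" and b: "b = a(j := a j \<inter> proj M i j (a i))"
      using step_form[OF ab(2)] by blast
    have fin: "finite (a k)" if k: "k < dim M" for k
    proof -
      have "a k \<subseteq> atoms M k" by (rule rels_sub[OF ab(1) k])
      moreover have "finite (atoms M k)" by (rule na_finite[OF ma_na[OF ma k]])
      ultimately show ?thesis by (rule finite_subset)
    qed
    have ne: "b j \<noteq> a j"
    proof
      assume e: "b j = a j"
      have "a j \<inter> proj M i j (a i) = a j" using e b by simp
      hence "b = a" using b by simp
      thus False using ab(3) by simp
    qed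
    have "b j \<subseteq> a j" using b by simp
    hence "b j \<subset> a j" using ne by (rule psubsetI)
    hence lt: "card (b j) < card (a j)" using fin[OF ij(2)] by (simp add: psubset_card_mono)
    have le: "card (b k) \<le> card (a k)" if "k \<in> {..<dim M}" for k
    proof (cases "k = j")
      case True thus ?thesis using lt by simp
    next
      case False thus ?thesis using b by simp
    qed
    show ?thesis
      by (rule sum_strict_mono_ex1) (use le lt ij in auto)
  qed
  have mono: "t \<le> b" if m: "a \<in> rels M" "\<forall>z. proj_step M t z \<longrightarrow> z = t" "t \<le> a" "proj_step M a b" for a t b
  proof -
    obtain i j where ij: "i < dim M" "j < dim M" "i \<noteq> j" and b: "b = a(j := a j \<inter> proj M i j (a i))"
      using step_form[OF m(4)] by blast
    have pt: "pterm M t" using m(2) pterm_iff by blast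
    have tle: "t k \<subseteq> a k" for k using m(3) unfolding le_fun_def by blast
    have "t j \<subseteq> proj M i j (t i)" using pt ij unfolding pterm_def by blast
    also have "\<dots> \<subseteq> proj M i j (a i)"
      by (rule proj_mono[OF ma_proj[OF ma ij] tle rels_sub[OF m(1) ij(1)]])
    finally have tj: "t j \<subseteq> a j \<inter> proj M i j (a i)" using tle by blast
    show ?thesis unfolding le_fun_def
    proof
      fix k show "t k \<le> b k"
      proof (cases "k = j")
        case True thus ?thesis using tj b by simp
      next
        case False thus ?thesis using tle b by simp
      qed
    qed
  qed
  have fc: "(proj_step M)\<^sup>*\<^sup>* R (fixpoint_closure (proj_step M) R) \<and>
         (\<forall>z. proj_step M (fixpoint_closure (proj_step M) R) z \<longrightarrow> z = fixpoint_closure (proj_step M) R) \<and>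
         fixpoint_closure (proj_step M) R \<in> rels M \<and> fixpoint_closure (proj_step M) R \<le> R \<and>
         (\<forall>t. (\<forall>z. proj_step M t z \<longrightarrow> z = t) \<longrightarrow> t \<le> R \<longrightarrow> t \<le> fixpoint_closure (proj_step M) R)"
    apply (rule fc_lemma[where D = "\<lambda>R. R \<in> rels M" and \<mu> = "\<lambda>R. \<Sum>i<dim M. card (R i)"])
    apply (rule R)
    apply (erule (1) pres)
    apply (erule (1) dec)
    apply (erule (2) meas)
    apply (erule (3) mono)
    done
  have f1: "proj_closure M R \<in> rels M" "proj_closure M R \<le> R"
    "\<forall>z. proj_step M (proj_closure M R) z \<longrightarrow> z = proj_closure M R"
    "\<forall>t. (\<forall>z. proj_step M t z \<longrightarrow> z = t) \<longrightarrow> t \<le> R \<longrightarrow> t \<le> proj_closure M R"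
    using fc unfolding proj_closure_def by simp_all
  have "pterm M (proj_closure M R)" using f1(3) pterm_iff by blast
  moreover have "\<forall>T. pterm M T \<longrightarrow> T \<le> R \<longrightarrow> T \<le> proj_closure M R"
    using f1(4) pterm_iff by blast
  ultimately show ?thesis using f1(1,2) by blast
qed

lemma pc_id: "multi_algebra M \<Longrightarrow> R \<in> rels M \<Longrightarrow> pterm M R \<Longrightarrow> proj_closure M R = R"
  using pc_props[of M R] by (meson order.antisym order_refl)

lemma pc_mono: "multi_algebra M \<Longrightarrow> R' \<in> rels M \<Longrightarrow> R \<le> R' \<Longrightarrow> proj_closure M R \<le> proj_closure M R'"
proof -
  assume a: "multi_algebra M" "R' \<in> rels M" "R \<le> R'"
  have R: "R \<in> rels M" using rels_down a by blast
  show ?thesis using pc_props[OF a(1) R] pc_props[OF a(1) a(2)] a(3) order_trans by metis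
qed

definition netD :: "'b multi_alg \<Rightarrow> nat set \<Rightarrow> (nat \<Rightarrow> nat \<Rightarrow> 'b rel) \<Rightarrow> bool" where
  "netD M E N \<longleftrightarrow> (\<forall>a\<in>E. \<forall>b\<in>E. a \<noteq> b \<longrightarrow> N a b \<in> rels M \<and> N b a = mconv M (N a b))"

definition aterm :: "'b multi_alg \<Rightarrow> nat set \<Rightarrow> (nat \<Rightarrow> nat \<Rightarrow> 'b rel) \<Rightarrow> bool" where
  "aterm M E N \<longleftrightarrow> (\<forall>a\<in>E. \<forall>c\<in>E. a \<noteq> c \<longrightarrow> proj_closure M (N a c) = N a c \<and>
      N c a = mconv M (N a c) \<and> (\<forall>b\<in>E. b \<noteq> a \<longrightarrow> b \<noteq> c \<longrightarrow> N a c \<le> mcomp M (N a b) (N b c)))"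

definition nmeas :: "'b multi_alg \<Rightarrow> nat set \<Rightarrow> (nat \<Rightarrow> nat \<Rightarrow> 'b rel) \<Rightarrow> nat" where
  "nmeas M E N = (\<Sum>a\<in>E. \<Sum>b\<in>E. if a = b then 0 else \<Sum>i<dim M. card (N a b i))"

lemma upd_pair_apply: "upd_pair M N x z R a b =
   (if a = x \<and> b = z then R else if a = z \<and> b = x then mconv M R else N a b)"
  by (simp add: upd_pair_def)

lemma ac_step_form: "ac_step M E x y \<Longrightarrow> \<exists>a\<in>E. \<exists>c\<in>E. a \<noteq> c \<and> (\<exists>R. y = upd_pair M x a c R \<and>
   (R = proj_closure M (x a c) \<or> (\<exists>b\<in>E. b \<noteq> a \<and> b \<noteq> c \<and> R = minter (x a c) (mcomp M (x a b) (x b c)))))"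
  unfolding ac_step_def by blast

lemma step_R:
  assumes ma: "multi_algebra M" and D: "netD M E x" and ac: "a \<in> E" "c \<in> E" "a \<noteq> c"
    and R: "R = proj_closure M (x a c) \<or> (\<exists>b\<in>E. b \<noteq> a \<and> b \<noteq> c \<and> R = minter (x a c) (mcomp M (x a b) (x b c)))"
  shows "R \<in> rels M \<and> R \<le> x a c"
proof -
  have xr: "x a c \<in> rels M" using D ac unfolding netD_def by blast
  show ?thesis
  proof (cases "R = proj_closure M (x a c)")
    case True thus ?thesis using pc_props[OF ma xr] by simp
  next
    case False
    then obtain b where "R = minter (x a c) (mcomp M (x a b) (x b c))" using R by blast
    hence "R \<le> x a c" using minter_le1 by simp
    thus ?thesis using rels_down[OF xr] by blast
  qed
qed

lemma sum2_strict:
  fixes f g :: "nat \<Rightarrow> nat \<Rightarrow> nat"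
  assumes fin: "finite E" and le: "\<And>p q. p \<in> E \<Longrightarrow> q \<in> E \<Longrightarrow> f p q \<le> g p q"
    and p0: "p0 \<in> E" and q0: "q0 \<in> E" and lt: "f p0 q0 < g p0 q0"
  shows "(\<Sum>p\<in>E. \<Sum>q\<in>E. f p q) < (\<Sum>p\<in>E. \<Sum>q\<in>E. g p q)"
proof (rule sum_strict_mono_ex1[OF fin])
  show "\<forall>p\<in>E. (\<Sum>q\<in>E. f p q) \<le> (\<Sum>q\<in>E. g p q)" using le by (simp add: sum_mono)
  have "(\<Sum>q\<in>E. f p0 q) < (\<Sum>q\<in>E. g p0 q)"
    by (rule sum_strict_mono_ex1[OF fin]) (use le p0 q0 lt in auto)
  thus "\<exists>p\<in>E. (\<Sum>q\<in>E. f p q) < (\<Sum>q\<in>E. g p q)" using p0 by blast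
qed

lemma rels_finite: "multi_algebra M \<Longrightarrow> R \<in> rels M \<Longrightarrow> finite (R i)"
proof (cases "i < dim M")
  case True
  assume a: "multi_algebra M" "R \<in> rels M"
  have "R i \<subseteq> atoms M i" by (rule rels_sub[OF a(2) True])
  moreover have "finite (atoms M i)" by (rule na_finite[OF ma_na[OF a(1) True]])
  ultimately show ?thesis by (rule finite_subset)
next
  case False
  assume a: "multi_algebra M" "R \<in> rels M"
  show ?thesis using rels_out[OF a(2) False] by simp
qed

lemma upd_props:
  assumes ma: "multi_algebra M" and fin: "finite E" and D: "netD M E x"
    and ac: "a \<in> E" "c \<in> E" "a \<noteq> c" and R: "R \<in> rels M" and Rle: "R \<le> x a c"
  shows "netD M E (upd_pair M x a c R) \<and> upd_pair M x a c R \<le> x \<and>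
         (upd_pair M x a c R \<noteq> x \<longrightarrow> nmeas M E (upd_pair M x a c R) < nmeas M E x)"
proof -
  let ?y = "upd_pair M x a c R"
  have xr: "x p q \<in> rels M" if "p \<in> E" "q \<in> E" "p \<noteq> q" for p q using D that unfolding netD_def by blast
  have xs: "x q p = mconv M (x p q)" if "p \<in> E" "q \<in> E" "p \<noteq> q" for p q using D that unfolding netD_def by blast
  have yac: "?y a c = R" by (simp add: upd_pair_apply)
  have yca: "?y c a = mconv M R" using ac(3) by (simp add: upd_pair_apply)
  have yo: "?y p q = x p q" if "\<not> (p = a \<and> q = c)" "\<not> (p = c \<and> q = a)" for p q
    by (simp only: upd_pair_apply that if_False)
  have nD: "netD M E ?y" unfolding netD_def
  proof (intro ballI impI)
    fix p q assume pq: "p \<in> E" "q \<in> E" "p \<noteq> q"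
    show "?y p q \<in> rels M \<and> ?y q p = mconv M (?y p q)"
    proof (cases "p = a \<and> q = c")
      case True thus ?thesis using yac yca R by simp
    next
      case F1: False
      show ?thesis
      proof (cases "p = c \<and> q = a")
        case True thus ?thesis using yac yca R mconv_rels[OF ma R] mconv_mconv[OF ma R] by simp
      next
        case False
        thus ?thesis using F1 yo xr[OF pq] xs[OF pq] by auto
      qed
    qed
  qed
  have yle: "?y p q \<le> x p q" for p q
  proof (cases "p = a \<and> q = c")
    case True thus ?thesis using yac Rle by simp
  next
    case F1: False
    show ?thesis
    proof (cases "p = c \<and> q = a")
      case True
      have "mconv M R \<le> mconv M (x a c)" by (rule mconv_mono[OF ma xr[OF ac] Rle])
      thus ?thesis using True yca xs[OF ac] by simp
    next
      case False
      thus ?thesis using F1 yo by simp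
    qed
  qed
  have le: "?y \<le> x" using yle unfolding le_fun_def by blast
  have ms: "nmeas M E ?y < nmeas M E x" if ne: "?y \<noteq> x"
  proof -
    obtain p q where pq0: "?y p q \<noteq> x p q" using ne by (meson ext)
    have pq1: "(p = a \<and> q = c) \<or> (p = c \<and> q = a)" using pq0 yo by blast
    hence pq: "p \<in> E" "q \<in> E" "p \<noteq> q" using ac by auto
    obtain i where i0: "?y p q i \<noteq> x p q i" using pq0 by (meson ext)
    have yr: "?y p q \<in> rels M" using nD pq unfolding netD_def by blast
    have i: "i < dim M"
    proof (rule ccontr)
      assume "\<not> i < dim M"
      thus False using rels_out[OF yr] rels_out[OF xr[OF pq]] i0 by simp
    qed
    have sub: "?y p q k \<subseteq> x p q k" for p q k using yle unfolding le_fun_def by blast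
    have "?y p q i \<subset> x p q i" using sub i0 by blast
    hence lt: "card (?y p q i) < card (x p q i)" using rels_finite[OF ma xr[OF pq]] by (rule psubset_card_mono[rotated])
    show ?thesis unfolding nmeas_def
    proof (rule sum2_strict[OF fin _ pq(1) pq(2)])
      fix p' q' assume p'q': "p' \<in> E" "q' \<in> E"
      show "(if p' = q' then 0 else \<Sum>i<dim M. card (?y p' q' i)) \<le> (if p' = q' then 0 else \<Sum>i<dim M. card (x p' q' i))"
      proof (cases "p' = q'")
        case True thus ?thesis by simp
      next
        case False
        have "card (?y p' q' k) \<le> card (x p' q' k)" for k
          by (rule card_mono[OF rels_finite[OF ma xr[OF p'q' False]] sub])
        thus ?thesis using False by (simp add: sum_mono)
      qed
    next
      have "(\<Sum>i<dim M. card (?y p q i)) < (\<Sum>i<dim M. card (x p q i))"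
      proof (rule sum_strict_mono_ex1)
        show "finite {..<dim M}" by simp
        show "\<forall>k\<in>{..<dim M}. card (?y p q k) \<le> card (x p q k)"
          using card_mono[OF rels_finite[OF ma xr[OF pq]] sub] by blast
        show "\<exists>k\<in>{..<dim M}. card (?y p q k) < card (x p q k)" using i lt by blast
      qed
      thus "(if p = q then 0 else \<Sum>i<dim M. card (?y p q i)) < (if p = q then 0 else \<Sum>i<dim M. card (x p q i))"
        using pq(3) by simp
    qed
  qed
  show ?thesis using nD le ms by blast
qed

lemma term_aterm:
  assumes t: "\<forall>z. ac_step M E N z \<longrightarrow> z = N"
  shows "aterm M E N"
  unfolding aterm_def
proof (intro ballI impI conjI)
  fix a c assume ac: "a \<in> E" "c \<in> E" "a \<noteq> c"
  have "ac_step M E N (upd_pair M N a c (proj_closure M (N a c)))" unfolding ac_step_def using ac by blast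
  hence e: "upd_pair M N a c (proj_closure M (N a c)) = N" using t by blast
  have e1: "upd_pair M N a c (proj_closure M (N a c)) a c = N a c" using e by simp
  thus pc: "proj_closure M (N a c) = N a c" by (simp add: upd_pair_apply)
  have e2: "upd_pair M N a c (proj_closure M (N a c)) c a = N c a" using e by simp
  thus "N c a = mconv M (N a c)" using ac(3) pc by (simp add: upd_pair_apply)
  {
    fix b assume b: "b \<in> E" "b \<noteq> a" "b \<noteq> c"
    have "ac_step M E N (upd_pair M N a c (minter (N a c) (mcomp M (N a b) (N b c))))"
      unfolding ac_step_def using ac b by blast
    hence "upd_pair M N a c (minter (N a c) (mcomp M (N a b) (N b c))) = N" using t by blast
    hence "upd_pair M N a c (minter (N a c) (mcomp M (N a b) (N b c))) a c = N a c" by simp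
    hence "minter (N a c) (mcomp M (N a b) (N b c)) = N a c" by (simp add: upd_pair_apply)
    thus "N a c \<le> mcomp M (N a b) (N b c)" using minter_le2 by metis
  }
qed

lemma upd_same: "N c a = mconv M (N a c) \<Longrightarrow> upd_pair M N a c (N a c) = N"
  unfolding fun_eq_iff by (simp add: upd_pair_apply)

lemma aterm_term:
  assumes at: "aterm M E N"
  shows "\<forall>z. ac_step M E N z \<longrightarrow> z = N"
proof (intro allI impI)
  fix z assume "ac_step M E N z"
  then obtain a c R where ac: "a \<in> E" "c \<in> E" "a \<noteq> c" and z: "z = upd_pair M N a c R"
    and R: "R = proj_closure M (N a c) \<or> (\<exists>b\<in>E. b \<noteq> a \<and> b \<noteq> c \<and> R = minter (N a c) (mcomp M (N a b) (N b c)))"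
    using ac_step_form by blast
  have A: "proj_closure M (N a c) = N a c" "N c a = mconv M (N a c)"
    "\<forall>b\<in>E. b \<noteq> a \<longrightarrow> b \<noteq> c \<longrightarrow> N a c \<le> mcomp M (N a b) (N b c)"
    using at ac unfolding aterm_def by blast+
  have "R = N a c"
  proof (cases "R = proj_closure M (N a c)")
    case True thus ?thesis using A by simp
  next
    case False
    then obtain b where b: "b \<in> E" "b \<noteq> a" "b \<noteq> c" and Rb: "R = minter (N a c) (mcomp M (N a b) (N b c))"
      using R by blast
    have "N a c \<le> mcomp M (N a b) (N b c)" using A(3) b by blast
    thus ?thesis using Rb unfolding minter_def le_fun_def fun_eq_iff by blast
  qed
  thus "z = N" using z upd_same[where N=N and a=a and c=c, OF A(2)] by simp
qed

lemma ac_step_props: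
  assumes ma: "multi_algebra M" and fin: "finite E" and D: "netD M E x" and st: "ac_step M E x y"
  shows "netD M E y \<and> y \<le> x \<and> (y \<noteq> x \<longrightarrow> nmeas M E y < nmeas M E x)"
proof -
  obtain a c R where ac: "a \<in> E" "c \<in> E" "a \<noteq> c" and y: "y = upd_pair M x a c R"
    and R: "R = proj_closure M (x a c) \<or> (\<exists>b\<in>E. b \<noteq> a \<and> b \<noteq> c \<and> R = minter (x a c) (mcomp M (x a b) (x b c)))"
    using ac_step_form[OF st] by blast
  have Rr: "R \<in> rels M \<and> R \<le> x a c" by (rule step_R[OF ma D ac R])
  show ?thesis using upd_props[OF ma fin D ac] Rr y by blast
qed

lemma ac_mono:
  assumes ma: "multi_algebra M" and D: "netD M E x" and t: "\<forall>z. ac_step M E t z \<longrightarrow> z = t"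
    and tle: "t \<le> x" and st: "ac_step M E x y"
  shows "t \<le> y"
proof -
  obtain a c R where ac: "a \<in> E" "c \<in> E" "a \<noteq> c" and y: "y = upd_pair M x a c R"
    and R: "R = proj_closure M (x a c) \<or> (\<exists>b\<in>E. b \<noteq> a \<and> b \<noteq> c \<and> R = minter (x a c) (mcomp M (x a b) (x b c)))"
    using ac_step_form[OF st] by blast
  have Rr: "R \<in> rels M" "R \<le> x a c" using step_R[OF ma D ac R] by blast+
  have at: "aterm M E t" by (rule term_aterm[OF t])
  have xr: "x p q \<in> rels M" if "p \<in> E" "q \<in> E" "p \<noteq> q" for p q using D that unfolding netD_def by blast
  have tpq: "t p q \<le> x p q" for p q using tle unfolding le_fun_def by blast
  have tacr: "t a c \<in> rels M" by (rule rels_down[OF xr[OF ac] tpq])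
  have A: "proj_closure M (t a c) = t a c" "t c a = mconv M (t a c)"
    "\<forall>b\<in>E. b \<noteq> a \<longrightarrow> b \<noteq> c \<longrightarrow> t a c \<le> mcomp M (t a b) (t b c)"
    using at ac unfolding aterm_def by blast+
  have t1: "t a c \<le> R"
  proof (cases "R = proj_closure M (x a c)")
    case True
    have "pterm M (proj_closure M (t a c))" using pc_props[OF ma tacr] by blast
    hence pt: "pterm M (t a c)" using A(1) by simp
    have "t a c \<le> proj_closure M (x a c)" using pc_props[OF ma xr[OF ac]] pt tpq by blast
    thus ?thesis using True by simp
  next
    case False
    then obtain b where b: "b \<in> E" "b \<noteq> a" "b \<noteq> c" and Rb: "R = minter (x a c) (mcomp M (x a b) (x b c))"
      using R by blast
    have "t a c \<le> mcomp M (t a b) (t b c)" using A(3) b by blast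
    also have "\<dots> \<le> mcomp M (x a b) (x b c)"
      by (rule mcomp_mono[OF ma xr[OF ac(1) b(1) b(2)[symmetric]] xr[OF b(1) ac(2) b(3)] tpq tpq])
    finally have "t a c \<le> mcomp M (x a b) (x b c)" .
    thus ?thesis using Rb tpq[of a c] unfolding minter_def le_fun_def by blast
  qed
  have t2: "t c a \<le> mconv M R" using A(2) mconv_mono[OF ma Rr(1) t1] by simp
  show ?thesis
  proof (rule le_funI, rule le_funI)
    fix p q
    show "t p q \<le> y p q"
    proof (cases "p = a \<and> q = c")
      case True thus ?thesis using t1 y by (simp add: upd_pair_apply)
    next
      case F1: False
      show ?thesis
      proof (cases "p = c \<and> q = a")
        case True thus ?thesis using t2 y ac(3) by (simp add: upd_pair_apply)
      next
        case False
        have "y p q = x p q" unfolding y by (simp only: upd_pair_apply F1 False if_False)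
        thus ?thesis using tpq by simp
      qed
    qed
  qed
qed

lemma ac_props:
  assumes ma: "multi_algebra M" and fin: "finite E" and D: "netD M E N"
  shows "(ac_step M E)\<^sup>*\<^sup>* N (alg_closure M E N) \<and>
         (\<forall>z. ac_step M E (alg_closure M E N) z \<longrightarrow> z = alg_closure M E N) \<and>
         netD M E (alg_closure M E N) \<and> alg_closure M E N \<le> N \<and>
         (\<forall>t. (\<forall>z. ac_step M E t z \<longrightarrow> z = t) \<longrightarrow> t \<le> N \<longrightarrow> t \<le> alg_closure M E N)"
  unfolding alg_closure_def
  apply (rule fc_lemma[where D = "netD M E" and \<mu> = "nmeas M E"])
  apply (rule D)
  using ac_step_props[OF ma fin] apply blast
  using ac_step_props[OF ma fin] apply blast
  using ac_step_props[OF ma fin] apply blast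
  using ac_mono[OF ma] apply blast
  done

theorem proposition6p27:
  fixes M M' :: "'b multi_alg" and U :: "'u set" and \<phi> :: "'b rel \<Rightarrow> ('u \<times> 'u) set"
    and S :: "'b rel set"
  assumes "seq_formalism M U \<phi>"
    and "weakening M' M"
    and "S \<subseteq> rels M"
    and "alg_tractable M' U \<phi> S"
  shows "alg_tractable M U \<phi> S"
proof -
  note sf = assms(1) and w = assms(2) and SR = assms(3) and tr = assms(4)
  have ma: "multi_algebra M" using sf unfolding seq_formalism_def by (elim conjE) assumption
  have ma': "multi_algebra M'" using w unfolding weakening_def by (elim conjE) assumption
  have eq1: "dim M' = dim M" using w unfolding weakening_def by (elim conjE) assumption
  have eq2: "atoms M' = atoms M" using w unfolding weakening_def by (elim conjE) assumption
  have eq3: "comp M' = comp M" using w unfolding weakening_def by (elim conjE) assumption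
  have eq4: "cnv M' = cnv M" using w unfolding weakening_def by (elim conjE) assumption
  have eq3': "comp M' i = comp M i" for i using eq3 by simp
  have eq4': "cnv M' i = cnv M i" for i using eq4 by simp
  note eq = eq1 eq2 eq3 eq4
  have wp: "\<forall>i < dim M. \<forall>j < dim M. i \<noteq> j \<longrightarrow> (\<forall>a \<in> atoms M i. proj M i j {a} \<subseteq> proj M' i j {a})"
    using w unfolding weakening_def by (elim conjE) assumption
  have phi_pc: "\<forall>R \<in> rels M. \<phi> (proj_closure M R) = \<phi> R"
    using sf unfolding seq_formalism_def by (elim conjE) assumption
  have phi_conv: "\<forall>R \<in> rels M. \<phi> (mconv M R) = (\<phi> R)\<inverse>"
    using sf unfolding seq_formalism_def by (elim conjE) assumption
  have phi_comp: "\<forall>R \<in> rels M. \<forall>R' \<in> rels M. \<phi> (mcomp M R R') \<supseteq> (\<phi> R O \<phi> R') \<inter> \<phi> (muniv M)"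
    using sf unfolding seq_formalism_def by (elim conjE) assumption
  have phi_inter: "\<forall>R \<in> rels M. \<forall>R' \<in> rels M. \<phi> (minter R R') = \<phi> R \<inter> \<phi> R'"
    using sf unfolding seq_formalism_def by (elim conjE) assumption
  have phi_basic: "\<forall>R \<in> rels M. \<phi> R = (\<Union>B \<in> {B. basic M B \<and> msub B R}. \<phi> B)"
    using sf unfolding seq_formalism_def by (elim conjE) assumption
  have rels_eq: "rels M' = rels M" unfolding rels_def using eq by simp
  have mconv_eq: "mconv M' = mconv M"
  proof (rule ext, rule ext)
    fix R i show "mconv M' R i = mconv M R i" unfolding mconv_def using eq1 eq4 by simp
  qed
  have mcomp_eq: "mcomp M' = mcomp M"
  proof (rule ext, rule ext, rule ext)
    fix R R' i show "mcomp M' R R' i = mcomp M R R' i" unfolding mcomp_def using eq1 eq3 by simp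
  qed
  have netD_eq: "netD M' E N = netD M E N" for E N unfolding netD_def rels_eq mconv_eq ..
  have nw_eq: "network_over M' S E N = network_over M S E N" for E N
    unfolding network_over_def mconv_eq ..
  have ti_eq: "trivially_inconsistent M' E N = trivially_inconsistent M E N" for E N
    unfolding trivially_inconsistent_def eq ..
  have pterm_tr: "pterm M' R" if R: "R \<in> rels M" and pt: "pterm M R" and ne: "\<forall>i<dim M. R i \<noteq> {}" for R
    unfolding pterm_def
  proof (intro allI impI)
    fix i j assume ij': "i < dim M'" "j < dim M'" "i \<noteq> j"
    have ij: "i < dim M" "j < dim M" "i \<noteq> j" using ij' eq by auto
    have Ri: "R i \<subseteq> atoms M i" by (rule rels_sub[OF R ij(1)])
    have fi: "finite (R i)" by (rule rels_finite[OF ma R])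
    have nei: "R i \<noteq> {}" using ne ij by blast
    have po: "projection_op (atoms M i) (cnv M i) (atoms M j) (cnv M j) (proj M i j)"
      by (rule ma_proj[OF ma ij])
    have po': "projection_op (atoms M i) (cnv M i) (atoms M j) (cnv M j) (proj M' i j)"
      using ma_proj[OF ma' ij'] eq by simp
    have "R j \<subseteq> proj M i j (R i)" using pt ij unfolding pterm_def by blast
    also have "\<dots> = (\<Union>a\<in>R i. proj M i j {a})" by (rule proj_singletons[OF po fi nei Ri])
    also have "\<dots> \<subseteq> (\<Union>a\<in>R i. proj M' i j {a})" using wp ij Ri by blast
    also have "\<dots> = proj M' i j (R i)" by (rule proj_singletons[OF po' fi nei Ri, symmetric])
    finally show "R j \<subseteq> proj M' i j (R i)" .
  qed
  show ?thesis unfolding alg_tractable_def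
  proof (intro allI impI)
    fix E N assume nw: "network_over M S E N"
    have fin: "finite E" using nw unfolding network_over_def by blast
    have D: "netD M E N" using nw SR unfolding network_over_def netD_def by blast
    define C where "C = alg_closure M E N"
    have Cp: "(ac_step M E)\<^sup>*\<^sup>* N C" "\<forall>z. ac_step M E C z \<longrightarrow> z = C" "netD M E C" "C \<le> N"
      using ac_props[OF ma fin D] unfolding C_def by blast+
    show "satisfiable U \<phi> E N \<longleftrightarrow> \<not> trivially_inconsistent M E C"
    proof
      assume "satisfiable U \<phi> E N"
      then obtain u where u: "\<forall>x\<in>E. \<forall>y\<in>E. x \<noteq> y \<longrightarrow> (u x, u y) \<in> \<phi> (N x y)"
        unfolding satisfiable_def by blast
      define sol where "sol z \<longleftrightarrow> (\<forall>x\<in>E. \<forall>y\<in>E. x \<noteq> y \<longrightarrow> (u x, u y) \<in> \<phi> (z x y))" for z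
      have inv: "netD M E z \<and> sol z" if "(ac_step M E)\<^sup>*\<^sup>* N z" for z
        using that
      proof (induction rule: rtranclp_induct)
        case base thus ?case using D u unfolding sol_def by blast
      next
        case (step z z')
        have Dz: "netD M E z" and sz: "sol z" using step.IH by blast+
        have Dz': "netD M E z'" using ac_step_props[OF ma fin Dz step.hyps(2)] by blast
        obtain a c R where ac: "a \<in> E" "c \<in> E" "a \<noteq> c" and z': "z' = upd_pair M z a c R"
          and R: "R = proj_closure M (z a c) \<or> (\<exists>b\<in>E. b \<noteq> a \<and> b \<noteq> c \<and> R = minter (z a c) (mcomp M (z a b) (z b c)))"
          using ac_step_form[OF step.hyps(2)] by blast
        have Rr: "R \<in> rels M" using step_R[OF ma Dz ac R] by blast
        have zr: "z p q \<in> rels M" if "p \<in> E" "q \<in> E" "p \<noteq> q" for p q using Dz that unfolding netD_def by blast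
        have s: "(u p, u q) \<in> \<phi> (z p q)" if "p \<in> E" "q \<in> E" "p \<noteq> q" for p q using sz that unfolding sol_def by blast
        have uR: "(u a, u c) \<in> \<phi> R"
        proof (cases "R = proj_closure M (z a c)")
          case True thus ?thesis using phi_pc zr[OF ac] s[OF ac] by simp
        next
          case False
          then obtain b where b: "b \<in> E" "b \<noteq> a" "b \<noteq> c" and Rb: "R = minter (z a c) (mcomp M (z a b) (z b c))"
            using R by blast
          have zab: "z a b \<in> rels M" using zr[OF ac(1) b(1) b(2)[symmetric]] .
          have zbc: "z b c \<in> rels M" using zr[OF b(1) ac(2) b(3)] .
          have mc: "mcomp M (z a b) (z b c) \<in> rels M" by (rule mcomp_rels[OF ma zab zbc])
          have mu: "minter (z a c) (muniv M) = z a c"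
            using zr[OF ac] unfolding minter_def muniv_def fun_eq_iff rels_def by auto
          have "\<phi> (z a c) = \<phi> (z a c) \<inter> \<phi> (muniv M)"
            using phi_inter zr[OF ac] muniv_rels mu by metis
          hence un: "(u a, u c) \<in> \<phi> (muniv M)" using s[OF ac] by blast
          have "(u a, u c) \<in> \<phi> (z a b) O \<phi> (z b c)"
            using s[OF ac(1) b(1) b(2)[symmetric]] s[OF b(1) ac(2) b(3)] by blast
          hence "(u a, u c) \<in> \<phi> (mcomp M (z a b) (z b c))" using un phi_comp zab zbc by blast
          moreover have "\<phi> R = \<phi> (z a c) \<inter> \<phi> (mcomp M (z a b) (z b c))"
            using phi_inter zr[OF ac] mc Rb by blast
          ultimately show ?thesis using s[OF ac] by blast
        qed
        have "sol z'" unfolding sol_def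
        proof (intro ballI impI)
          fix p q assume pq: "p \<in> E" "q \<in> E" "p \<noteq> q"
          show "(u p, u q) \<in> \<phi> (z' p q)"
          proof (cases "p = a \<and> q = c")
            case True thus ?thesis using uR z' by (simp add: upd_pair_apply)
          next
            case F1: False
            show ?thesis
            proof (cases "p = c \<and> q = a")
              case True
              have "z' p q = mconv M R" using True z' ac(3) by (simp add: upd_pair_apply)
              thus ?thesis using True uR phi_conv Rr by simp
            next
              case False
              have "z' p q = z p q" unfolding z' by (simp only: upd_pair_apply F1 False if_False)
              thus ?thesis using s[OF pq] by simp
            qed
          qed
        qed
        thus ?case using Dz' by blast
      qed
      have sC: "sol C" using inv[OF Cp(1)] by blast
      show "\<not> trivially_inconsistent M E C"
      proof
        assume "trivially_inconsistent M E C"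
        then obtain a b i where ab: "a \<in> E" "b \<in> E" "a \<noteq> b" and i: "i < dim M" and e: "C a b i = {}"
          unfolding trivially_inconsistent_def by blast
        have Cr: "C a b \<in> rels M" using Cp(3) ab unfolding netD_def by blast
        have "(u a, u b) \<in> \<phi> (C a b)" using sC ab unfolding sol_def by blast
        hence "(u a, u b) \<in> (\<Union>B \<in> {B. basic M B \<and> msub B (C a b)}. \<phi> B)" using phi_basic Cr by blast
        then obtain B where B: "basic M B" "msub B (C a b)" by blast
        obtain x where "B i = {x}" using B(1) i unfolding basic_def by blast
        thus False using B(2) e unfolding msub_def by (metis insert_not_empty subset_empty)
      qed
    next
      assume nti: "\<not> trivially_inconsistent M E C"
      have ne: "C a b i \<noteq> {}" if "a \<in> E" "b \<in> E" "a \<noteq> b" "i < dim M" for a b i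
        using nti that unfolding trivially_inconsistent_def by blast
      have atC: "aterm M E C" by (rule term_aterm[OF Cp(2)])
      have atC': "aterm M' E C" unfolding aterm_def
      proof (intro ballI impI conjI)
        fix a c assume ac: "a \<in> E" "c \<in> E" "a \<noteq> c"
        have A: "proj_closure M (C a c) = C a c" "C c a = mconv M (C a c)"
          "\<forall>b\<in>E. b \<noteq> a \<longrightarrow> b \<noteq> c \<longrightarrow> C a c \<le> mcomp M (C a b) (C b c)"
          using atC ac unfolding aterm_def by blast+
        have Cr: "C a c \<in> rels M" using Cp(3) ac unfolding netD_def by blast
        have "pterm M (proj_closure M (C a c))" using pc_props[OF ma Cr] by blast
        hence ptM: "pterm M (C a c)" using A(1) by simp
        have ptM': "pterm M' (C a c)" using pterm_tr[OF Cr ptM] ne ac by blast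
        show "proj_closure M' (C a c) = C a c" using pc_id[OF ma' _ ptM'] Cr rels_eq by simp
        show "C c a = mconv M' (C a c)" using A(2) mconv_eq by simp
        {
          fix b assume b: "b \<in> E" "b \<noteq> a" "b \<noteq> c"
          show "C a c \<le> mcomp M' (C a b) (C b c)" using A(3) mcomp_eq b by simp
        }
      qed
      have tC': "\<forall>z. ac_step M' E C z \<longrightarrow> z = C" by (rule aterm_term[OF atC'])
      have D': "netD M' E N" using D netD_eq by simp
      have "C \<le> alg_closure M' E N" using ac_props[OF ma' fin D'] tC' Cp(4) by blast
      hence CC: "C a b i \<subseteq> alg_closure M' E N a b i" for a b i unfolding le_fun_def by blast
      have "\<not> trivially_inconsistent M E (alg_closure M' E N)"
      proof
        assume "trivially_inconsistent M E (alg_closure M' E N)"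
        then obtain a b i where ab: "a \<in> E" "b \<in> E" "a \<noteq> b" and i: "i < dim M" and e: "alg_closure M' E N a b i = {}"
          unfolding trivially_inconsistent_def by blast
        thus False using ne[OF ab i] CC[of a b i] by blast
      qed
      hence "\<not> trivially_inconsistent M' E (alg_closure M' E N)" using ti_eq by simp
      moreover have "network_over M' S E N" using nw nw_eq by simp
      ultimately show "satisfiable U \<phi> E N" using tr unfolding alg_tractable_def by blast
    qed
  qed
qed

end
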